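(* For every $c\in\mathbb{R}^m$, $$(b_\infty)^m\frac{\lambda(\|c\|)}{(2\pi)^{m/2}}\kappa_m\le \operatorname{vol}_m(G(c))\le\frac{\lambda(\|c\|)}{(2\pi)^{m/2}}\kappa_m,$$ where $\kappa_m$ is the volume of the unit ball of $\mathbb{R}^m$.
   Context: For an integrable random vector $X\in\mathbb{R}^m$, the Vitale zonoid $\mathbb{E}\underline{X}$ is the convex body with support function $h(u)=\frac12\mathbb{E}|\langle u,X\rangle|$ (where $h_K(u)=\sup_{x\in K}\langle u,x\rangle$). For $c\in\mathbb{R}^m$, $G(c):=\mathbb{E}\underline{c+\xi}$ with $\xi\in\mathbb{R}^m$ a standard Gaussian vector. $\operatorname{erf}(t)=\frac{2}{\sqrt\pi}\int_0^te^{-s^2}ds$; $\lambda(s)=e^{-s^2/2}+\sqrt{\pi/2}\,s\,\operatorname{erf}(s/\sqrt2)$; $\varphi_\infty(x,z)=|z|e^{-x^2/(\pi z^2)}+x\operatorname{erf}\left(\frac{x}{\sqrt\pi|z|}\right)$ (equal to $|x|$ at $z=0$); $b_\infty:=\min\{\varphi_\infty(\cos t,\sin t):t\in[0,2\pi]\}\approx0.91$. *)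

theory Defs
  imports "HOL-Analysis.Analysis"
begin

definition erf :: "real \<Rightarrow> real" where
  "erf t = 2 / sqrt pi * (LBINT s=0..t. exp (- (s\<^sup>2)))"

definition lam :: "real \<Rightarrow> real" where
  "lam s = exp (- (s\<^sup>2) / 2) + sqrt (pi / 2) * s * erf (s / sqrt 2)"

definition phi_inf :: "real \<Rightarrow> real \<Rightarrow> real" where
  "phi_inf x z = (if z = 0 then \<bar>x\<bar>
     else \<bar>z\<bar> * exp (- (x\<^sup>2) / (pi * z\<^sup>2)) + x * erf (x / (sqrt pi * \<bar>z\<bar>)))"

definition b_inf :: real where
  "b_inf = Inf ((\<lambda>t. phi_inf (cos t) (sin t)) ` {0..2*pi})"

definition std_gauss_density :: "'a::euclidean_space \<Rightarrow> real" where
  "std_gauss_density x = (2 * pi) powr (- real DIM('a) / 2) * exp (- (norm x)\<^sup>2 / 2)"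

text \<open>Vitale zonoid G(c) = E [c + xi]: the convex body whose support function is
  h(u) = 1/2 E|<u, c + xi>|, xi standard Gaussian.\<close>
definition G_support :: "'a::euclidean_space \<Rightarrow> 'a \<Rightarrow> real" where
  "G_support c u = (1/2) * (\<integral>x. \<bar>u \<bullet> (c + x)\<bar> * std_gauss_density x \<partial>lborel)"

definition G_zonoid :: "'a::euclidean_space \<Rightarrow> 'a set" where
  "G_zonoid c = {x. \<forall>u. u \<bullet> x \<le> G_support c u}"

end

theory Submission
  imports Defs "HOL-Probability.Probability" "HOL-Real_Asymp.Real_Asymp"
begin

typedef (overloaded) ('a::euclidean_space) dimidx = "{..<DIM('a)}"
  by (rule exI[of _ 0]) simp

instantiation dimidx :: (euclidean_space) linorder
begin
definition less_eq_dimidx :: "'a dimidx \<Rightarrow> 'a dimidx \<Rightarrow> bool" where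
  "less_eq_dimidx x y \<longleftrightarrow> Rep_dimidx x \<le> Rep_dimidx y"
definition less_dimidx :: "'a dimidx \<Rightarrow> 'a dimidx \<Rightarrow> bool" where
  "less_dimidx x y \<longleftrightarrow> Rep_dimidx x < Rep_dimidx y"
instance by standard (auto simp: less_eq_dimidx_def less_dimidx_def Rep_dimidx_inject)
end

instance dimidx :: (euclidean_space) finite
proof
  have "Rep_dimidx ` (UNIV :: 'a dimidx set) \<subseteq> {..<DIM('a)}"
    using Rep_dimidx by auto
  then have "finite (Rep_dimidx ` (UNIV :: 'a dimidx set))"
    using finite_subset by blast
  then show "finite (UNIV :: 'a dimidx set)"
    by (rule finite_imageD) (simp add: inj_on_def Rep_dimidx_inject)
qed

instance dimidx :: (euclidean_space) wellorder
proof
  fix P :: "'a dimidx \<Rightarrow> bool" and a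
  assume H: "\<And>x. (\<And>y. y < x \<Longrightarrow> P y) \<Longrightarrow> P x"
  show "P a"
    by (induct a rule: measure_induct_rule[of Rep_dimidx]) (rule H, simp add: less_dimidx_def)
qed

lemma card_dimidx: "CARD('a::euclidean_space dimidx) = DIM('a)"
  using type_definition.card[OF type_definition_dimidx] by simp


lemma Ig_deriv: "((\<lambda>u. LBINT y=0..u. exp (- (y\<^sup>2))) has_real_derivative exp (- (t\<^sup>2))) (at t)"
proof -
  define R where "R = \<bar>t\<bar> + 1"
  have "((\<lambda>u. LBINT y=0..u. exp (- (y\<^sup>2))) has_vector_derivative exp (- (t\<^sup>2))) (at t within {-R..R})"
  proof -
    have cont: "continuous_on {-R..R} (\<lambda>y. exp (- (y\<^sup>2)))"
      by (intro continuous_intros)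
    have "-R \<le> 0" "0 \<le> R" "-R \<le> t" "t \<le> R" by (auto simp: R_def)
    from interval_integral_FTC2[OF this(1,2) cont this(3,4)] show ?thesis
      by (simp add: zero_ereal_def)
  qed
  moreover have "at t within {-R..R} = at t"
    by (rule at_within_Icc_at) (auto simp: R_def)
  ultimately show ?thesis
    by (simp add: has_real_derivative_iff_has_vector_derivative)
qed

lemma erf_deriv: "(erf has_real_derivative 2 / sqrt pi * exp (- (t\<^sup>2))) (at t)"
  unfolding erf_def[abs_def] by (rule DERIV_cmult[OF Ig_deriv])

lemma erf_0 [simp]: "erf 0 = 0"
  by (simp add: erf_def zero_ereal_def)

lemma erf_odd: "erf (- t) = - erf t"
proof -
  have "(LBINT y=0..-t. exp (- (y\<^sup>2))) = (LBINT y=t..0. exp (- ((-y)\<^sup>2)))"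
    by (subst interval_integral_reflect) simp
  also have "\<dots> = - (LBINT y=0..t. exp (- (y\<^sup>2)))"
    by (simp add: interval_integral_endpoints_reverse[of t 0])
  finally show ?thesis by (simp add: erf_def)
qed

lemma erf_mono: "s \<le> t \<Longrightarrow> erf s \<le> erf t"
  by (rule DERIV_nonneg_imp_nondecreasing[of s t erf]) (auto intro!: exI erf_deriv)

lemma erf_nonneg: "0 \<le> t \<Longrightarrow> 0 \<le> erf t"
  using erf_mono[of 0 t] by simp

lemma erf_nonpos: "t \<le> 0 \<Longrightarrow> erf t \<le> 0"
  using erf_mono[of t 0] by simp

lemma mult_erf_nonneg: "0 \<le> x * erf (c * x)" if "0 \<le> c" for c x :: real
proof (cases "x \<ge> 0")
  case True then show ?thesis using that by (simp add: erf_nonneg)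
next
  case False then show ?thesis using that
    by (intro mult_nonpos_nonpos) (auto intro!: erf_nonpos simp: mult_nonneg_nonpos)
qed

lemma erf_le_1: "erf t \<le> 1"
proof (cases "t \<ge> 0")
  case False then show ?thesis using erf_nonpos[of t] by simp
next
  case True
  have int: "integrable lborel (\<lambda>x::real. indicator {0..} x *\<^sub>R exp (- x\<^sup>2))"
    using gaussian_moment_0 integrable.simps by blast
  have "(LBINT y=0..t. exp (- (y\<^sup>2))) = (\<integral>x. indicator {0..t} x *\<^sub>R exp (- x\<^sup>2) \<partial>lborel)"
    using True by (simp add: zero_ereal_def interval_integral_Icc set_lebesgue_integral_def)
  also have "\<dots> \<le> (\<integral>x. indicator {0..} x *\<^sub>R exp (- x\<^sup>2) \<partial>lborel)"
  proof (rule integral_mono[OF _ int])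
    show "integrable lborel (\<lambda>x::real. indicator {0..t} x *\<^sub>R exp (- x\<^sup>2))"
      by (rule Bochner_Integration.integrable_bound[OF int]) (auto simp: indicator_def)
  qed (auto simp: indicator_def)
  also have "\<dots> = sqrt pi / 2"
    using gaussian_moment_0 by (rule has_bochner_integral_integral_eq)
  finally show ?thesis
    by (simp add: erf_def field_simps)
qed


definition lamd :: "real \<Rightarrow> real" where
  "lamd s = sqrt (pi / 2) * erf (s / sqrt 2)"

lemma lam_eq: "lam s = exp (- (s\<^sup>2) / 2) + s * lamd s"
  by (simp add: lam_def lamd_def)

lemma const_aux: "sqrt (pi / 2) * (2 / sqrt pi) * (1 / sqrt 2) = 1"
proof -
  have e: "sqrt (pi / 2) = sqrt pi / sqrt 2" by (simp add: real_sqrt_divide)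
  have p: "sqrt pi > 0" by simp
  have "sqrt pi / sqrt 2 * (2 / sqrt pi) * (1 / sqrt 2) = 2 / (sqrt 2 * sqrt 2)"
    using p by (simp add: field_simps)
  also have "\<dots> = 1" by simp
  finally show ?thesis unfolding e .
qed

lemma lamd_deriv: "(lamd has_real_derivative exp (- (s\<^sup>2) / 2)) (at s)"
proof -
  have d: "((\<lambda>s. sqrt (pi / 2) * erf (s / sqrt 2)) has_real_derivative
          sqrt (pi / 2) * (2 / sqrt pi * exp (- ((s / sqrt 2)\<^sup>2)) * (1 / sqrt 2))) (at s)"
    by (rule DERIV_cmult[OF DERIV_chain2[OF erf_deriv DERIV_cdivide[OF DERIV_ident]]])
  have e: "sqrt (pi / 2) * (2 / sqrt pi * exp (- ((s / sqrt 2)\<^sup>2)) * (1 / sqrt 2)) = exp (- (s\<^sup>2) / 2)"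
  proof -
    have "sqrt (pi / 2) * (2 / sqrt pi * exp (- ((s / sqrt 2)\<^sup>2)) * (1 / sqrt 2)) =
          (sqrt (pi / 2) * (2 / sqrt pi) * (1 / sqrt 2)) * exp (- ((s / sqrt 2)\<^sup>2))"
      by (simp add: algebra_simps)
    also have "\<dots> = exp (- (s\<^sup>2) / 2)"
      unfolding const_aux by (simp add: power_divide)
    finally show ?thesis .
  qed
  from d have "(lamd has_real_derivative
          sqrt (pi / 2) * (2 / sqrt pi * exp (- ((s / sqrt 2)\<^sup>2)) * (1 / sqrt 2))) (at s)"
    by (simp only: lamd_def[abs_def])
  then show ?thesis by (metis e)
qed

lemma lam_deriv: "(lam has_real_derivative lamd s) (at s)"
proof -
  have A: "((\<lambda>s. exp (- (s\<^sup>2) / 2)) has_real_derivative (- s * exp (- (s\<^sup>2) / 2))) (at s)"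
    by (auto intro!: derivative_eq_intros simp: power2_eq_square)
  have "((\<lambda>s. exp (- (s\<^sup>2) / 2) + s * lamd s) has_real_derivative
          (- s * exp (- (s\<^sup>2) / 2)) + (1 * lamd s + exp (- (s\<^sup>2) / 2) * s)) (at s)"
    by (rule DERIV_add[OF A DERIV_mult[OF DERIV_ident lamd_deriv]])
  then show ?thesis
    by (simp add: lam_eq[abs_def] algebra_simps)
qed

lemma lamd_0 [simp]: "lamd 0 = 0" by (simp add: lamd_def)
lemma lam_0 [simp]: "lam 0 = 1" by (simp add: lam_def)

lemma lamd_nonneg: "0 \<le> s \<Longrightarrow> 0 \<le> lamd s"
  by (simp add: lamd_def erf_nonneg)

lemma lam_even: "lam (- s) = lam s"
  by (simp add: lam_def erf_odd)

lemma lam_abs: "lam \<bar>s\<bar> = lam s"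
  by (cases "s \<ge> 0") (auto simp: lam_even)

lemma lam_ge_1_nonneg: "0 \<le> s \<Longrightarrow> 1 \<le> lam s"
  using DERIV_nonneg_imp_nondecreasing[of 0 s lam]
  by (auto intro!: exI lam_deriv lamd_nonneg)

lemma lam_ge_1: "1 \<le> lam s"
  using lam_ge_1_nonneg[of "\<bar>s\<bar>"] by (simp add: lam_abs)

lemma lam_pos: "0 < lam s"
  using lam_ge_1[of s] by simp

lemma P_nonneg: "0 \<le> s \<Longrightarrow> 0 \<le> s * lam s - lamd s"
proof -
  assume s: "0 \<le> s"
  have "(\<lambda>s. s * lam s - lamd s) 0 \<le> (\<lambda>s. s * lam s - lamd s) s"
  proof (rule DERIV_nonneg_imp_nondecreasing[OF s])
    fix x :: real assume x: "0 \<le> x" "x \<le> s"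
    have "((\<lambda>s. s * lam s - lamd s) has_real_derivative (1 * lam x + x * lamd x - exp (- (x\<^sup>2) / 2))) (at x)"
      by (auto intro!: derivative_eq_intros lam_deriv lamd_deriv)
    moreover have "1 * lam x + x * lamd x - exp (- (x\<^sup>2) / 2) = 2 * x * lamd x"
      by (simp add: lam_eq)
    moreover have "0 \<le> 2 * x * lamd x" using x lamd_nonneg[of x] by simp
    ultimately show "\<exists>y. ((\<lambda>s. s * lam s - lamd s) has_real_derivative y) (at x) \<and> 0 \<le> y"
      by auto
  qed
  then show ?thesis by simp
qed

lemma H_nonneg: "0 \<le> s \<Longrightarrow> 0 \<le> s * lam s * lamd s - (lam s)\<^sup>2 + 1"
proof -
  assume s: "0 \<le> s"
  let ?H = "\<lambda>s. s * lam s * lamd s - (lam s)\<^sup>2 + 1"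
  have "?H 0 \<le> ?H s"
  proof (rule DERIV_nonneg_imp_nondecreasing[OF s])
    fix x :: real assume x: "0 \<le> x" "x \<le> s"
    have "(?H has_real_derivative ((1 * lam x + x * lamd x) * lamd x + x * lam x * exp (- (x\<^sup>2) / 2)
            - 2 * lam x * lamd x)) (at x)"
      by (auto intro!: derivative_eq_intros lam_deriv lamd_deriv simp: power2_eq_square)
    moreover have "(1 * lam x + x * lamd x) * lamd x + x * lam x * exp (- (x\<^sup>2) / 2)
            - 2 * lam x * lamd x = exp (- (x\<^sup>2) / 2) * (x * lam x - lamd x)"
      by (simp add: lam_eq algebra_simps)
    moreover have "0 \<le> exp (- (x\<^sup>2) / 2) * (x * lam x - lamd x)"
      using P_nonneg[of x] x by simp
    ultimately show "\<exists>y. (?H has_real_derivative y) (at x) \<and> 0 \<le> y"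
      by auto
  qed
  then show ?thesis by simp
qed

definition kq :: "real \<Rightarrow> real" where
  "kq s = ((lam s)\<^sup>2 - 1) / s\<^sup>2"

lemma kq_mono: "0 < s \<Longrightarrow> s \<le> r \<Longrightarrow> kq s \<le> kq r"
proof -
  assume s: "0 < s" "s \<le> r"
  show ?thesis unfolding kq_def
  proof (rule DERIV_nonneg_imp_nondecreasing[OF s(2)])
    fix x :: real assume x: "s \<le> x" "x \<le> r"
    then have xp: "0 < x" using s by simp
    have "((\<lambda>s. ((lam s)\<^sup>2 - 1) / s\<^sup>2) has_real_derivative
       ((2 * lam x * lamd x) * x\<^sup>2 - ((lam x)\<^sup>2 - 1) * (2 * x)) / (x\<^sup>2 * x\<^sup>2)) (at x)"
      using xp
      by (auto intro!: derivative_eq_intros lam_deriv simp: power2_eq_square)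
    moreover have "((2 * lam x * lamd x) * x\<^sup>2 - ((lam x)\<^sup>2 - 1) * (2 * x)) / (x\<^sup>2 * x\<^sup>2)
        = 2 * (x * lam x * lamd x - (lam x)\<^sup>2 + 1) / (x * x * x)"
      using xp by (simp add: field_simps power2_eq_square)
    moreover have "0 \<le> 2 * (x * lam x * lamd x - (lam x)\<^sup>2 + 1) / (x * x * x)"
      using H_nonneg[of x] xp by simp
    ultimately show "\<exists>y. ((\<lambda>s. ((lam s)\<^sup>2 - 1) / s\<^sup>2) has_real_derivative y) (at x) \<and> 0 \<le> y"
      by auto
  qed
qed

lemma lam_sq_le: "\<bar>\<sigma>\<bar> \<le> r \<Longrightarrow> (lam \<sigma>)\<^sup>2 \<le> 1 + kq r * \<sigma>\<^sup>2"
proof (cases "\<sigma> = 0")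
  case True then show ?thesis by simp
next
  case False
  assume le: "\<bar>\<sigma>\<bar> \<le> r"
  have "kq \<bar>\<sigma>\<bar> \<le> kq r" using kq_mono[of "\<bar>\<sigma>\<bar>" r] le False by simp
  then have "kq \<bar>\<sigma>\<bar> * \<sigma>\<^sup>2 \<le> kq r * \<sigma>\<^sup>2" by (simp add: mult_right_mono)
  moreover have "kq \<bar>\<sigma>\<bar> * \<sigma>\<^sup>2 = (lam \<sigma>)\<^sup>2 - 1"
    using False by (simp add: kq_def lam_abs)
  ultimately show ?thesis by simp
qed

lemma kq_le: "0 < r \<Longrightarrow> kq r \<le> pi / 2"
proof -
  assume r: "0 < r"
  have lim: "((\<lambda>t. (1 / t + sqrt (pi / 2))\<^sup>2) \<longlongrightarrow> (0 + sqrt (pi / 2))\<^sup>2) at_top"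
    by real_asymp
  have ev: "eventually (\<lambda>t. kq r \<le> (1 / t + sqrt (pi / 2))\<^sup>2) at_top"
    using eventually_ge_at_top[of r]
  proof eventually_elim
    case (elim t)
    then have t: "0 < t" using r by simp
    have "kq r \<le> kq t" using kq_mono[OF r elim] .
    also have "kq t \<le> (lam t)\<^sup>2 / t\<^sup>2" using t by (simp add: kq_def divide_right_mono)
    also have "lam t \<le> 1 + sqrt (pi / 2) * t"
    proof -
      have a: "exp (- (t\<^sup>2) / 2) \<le> 1" by simp
      have b: "t * erf (t / sqrt 2) \<le> t * 1"
        using t erf_le_1 by (intro mult_left_mono) auto
      have c: "sqrt (pi / 2) * (t * erf (t / sqrt 2)) \<le> sqrt (pi / 2) * t"
        using b by (simp add: mult_left_mono)
      have "lam t = exp (- (t\<^sup>2) / 2) + sqrt (pi / 2) * (t * erf (t / sqrt 2))"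
        by (simp add: lam_def mult.assoc)
      then show ?thesis using a c by linarith
    qed
    then have "(lam t)\<^sup>2 / t\<^sup>2 \<le> (1 + sqrt (pi / 2) * t)\<^sup>2 / t\<^sup>2"
      using lam_pos[of t] by (intro divide_right_mono power_mono) auto
    also have "\<dots> = (1 / t + sqrt (pi / 2))\<^sup>2"
      using t by (simp add: field_simps power2_eq_square)
    finally show ?case .
  qed
  have "kq r \<le> (0 + sqrt (pi / 2))\<^sup>2"
    by (rule tendsto_le[OF _ lim tendsto_const ev]) simp
  then show ?thesis by simp
qed


lemma phi_inf_nonneg: "0 \<le> phi_inf x z"
proof (cases "z = 0")
  case True then show ?thesis by (simp add: phi_inf_def)
next
  case False
  have "x / (sqrt pi * \<bar>z\<bar>) = (1 / (sqrt pi * \<bar>z\<bar>)) * x" by simp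
  then have "0 \<le> x * erf (x / (sqrt pi * \<bar>z\<bar>))"
    using mult_erf_nonneg[of "1 / (sqrt pi * \<bar>z\<bar>)" x] by simp
  then show ?thesis using False by (simp add: phi_inf_def)
qed

lemma b_inf_nonneg: "0 \<le> b_inf"
  unfolding b_inf_def
  by (rule cInf_greatest) (auto simp: phi_inf_nonneg)

lemma b_inf_le: "b_inf \<le> lam s / sqrt (1 + pi * s\<^sup>2 / 2)"
proof -
  define q where "q = sqrt (1 + pi * s\<^sup>2 / 2)"
  have q: "0 < q" unfolding q_def by (intro real_sqrt_gt_zero) (simp add: add_pos_nonneg)
  have qq: "q\<^sup>2 = 1 + pi * s\<^sup>2 / 2" unfolding q_def by (simp add: add_nonneg_nonneg)
  define x where "x = sqrt (pi / 2) * s / q"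
  define z where "z = 1 / q"
  have z: "0 < z" using q by (simp add: z_def)
  have sp: "(sqrt (pi / 2))\<^sup>2 = pi / 2" by simp
  have xz1: "x\<^sup>2 + z\<^sup>2 = 1"
  proof -
    have "x\<^sup>2 + z\<^sup>2 = ((sqrt (pi / 2))\<^sup>2 * s\<^sup>2 + 1) / q\<^sup>2"
      by (simp add: x_def z_def power_divide power_mult_distrib add_divide_distrib)
    also have "(sqrt (pi / 2))\<^sup>2 * s\<^sup>2 + 1 = q\<^sup>2"
      unfolding sp qq by simp
    finally show ?thesis using q by simp
  qed
  then have xb: "\<bar>x\<bar> \<le> 1"
    by (metis abs_le_square_iff abs_one le_add_same_cancel1 one_power2 zero_le_power2)
  define \<tau> where "\<tau> = arccos x"
  have cos: "cos \<tau> = x" using xb by (simp add: \<tau>_def cos_arccos_abs)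
  have "sin \<tau> = sqrt (1 - x\<^sup>2)" using xb by (simp add: \<tau>_def sin_arccos_abs)
  also have "1 - x\<^sup>2 = z\<^sup>2" using xz1 by simp
  finally have sin: "sin \<tau> = z" using z by simp
  have tau: "\<tau> \<in> {0..2*pi}"
  proof -
    have "-1 \<le> x" "x \<le> 1" using xb by auto
    then have "0 \<le> arccos x" "arccos x \<le> pi" using arccos_lbound arccos_ubound by auto
    then show ?thesis using pi_gt_zero by (simp add: \<tau>_def)
  qed
  have "b_inf \<le> phi_inf (cos \<tau>) (sin \<tau>)"
    unfolding b_inf_def
    by (rule cInf_lower) (use tau in \<open>auto intro!: bdd_belowI[of _ 0] simp: phi_inf_nonneg\<close>)
  also have "\<dots> = z * exp (- (x\<^sup>2) / (pi * z\<^sup>2)) + x * erf (x / (sqrt pi * z))"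
    using z by (simp add: cos sin phi_inf_def)
  also have "x / z = sqrt (pi / 2) * s"
    using q by (simp add: x_def z_def)
  then have "x = z * (sqrt (pi / 2) * s)" using z by (simp add: field_simps)
  then have "z * exp (- (x\<^sup>2) / (pi * z\<^sup>2)) + x * erf (x / (sqrt pi * z)) =
        z * exp (- ((z * (sqrt (pi / 2) * s))\<^sup>2) / (pi * z\<^sup>2)) + z * (sqrt (pi / 2) * s) * erf (z * (sqrt (pi / 2) * s) / (sqrt pi * z))"
    by simp
  also have "- ((z * (sqrt (pi / 2) * s))\<^sup>2) / (pi * z\<^sup>2) = - (s\<^sup>2) / 2"
    using z by (simp add: power_mult_distrib sp field_simps)
  also have "z * (sqrt (pi / 2) * s) / (sqrt pi * z) = s / sqrt 2"
    using z by (simp add: real_sqrt_divide field_simps)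
  also have "z * exp (- (s\<^sup>2) / 2) + z * (sqrt (pi / 2) * s) * erf (s / sqrt 2) = z * lam s"
    by (simp add: lam_def algebra_simps)
  also have "z * lam s = lam s / sqrt (1 + pi * s\<^sup>2 / 2)"
    by (simp add: z_def q_def)
  finally show ?thesis .
qed


lemma erf_lim_top: "(erf \<longlongrightarrow> 1) at_top"
proof -
  have si: "set_integrable lborel {0..} (\<lambda>x::real. exp (- (x\<^sup>2)))"
    unfolding set_integrable_def using gaussian_moment_0 integrable.simps by blast
  have lim: "((\<lambda>b. set_lebesgue_integral lborel {0..b} (\<lambda>x::real. exp (- (x\<^sup>2)))) \<longlongrightarrow>
      set_lebesgue_integral lborel {0..} (\<lambda>x::real. exp (- (x\<^sup>2)))) at_top"
    by (rule tendsto_set_lebesgue_integral_at_top[OF _ si]) simp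
  have v: "set_lebesgue_integral lborel {0..} (\<lambda>x::real. exp (- (x\<^sup>2))) = sqrt pi / 2"
    unfolding set_lebesgue_integral_def using gaussian_moment_0 by (rule has_bochner_integral_integral_eq)
  have "((\<lambda>b. 2 / sqrt pi * set_lebesgue_integral lborel {0..b} (\<lambda>x::real. exp (- (x\<^sup>2)))) \<longlongrightarrow>
      2 / sqrt pi * (sqrt pi / 2)) at_top"
    using lim unfolding v by (rule tendsto_mult_left)
  then have "((\<lambda>b. 2 / sqrt pi * set_lebesgue_integral lborel {0..b} (\<lambda>x::real. exp (- (x\<^sup>2)))) \<longlongrightarrow> 1) at_top"
    by simp
  moreover have "eventually (\<lambda>b. 2 / sqrt pi * set_lebesgue_integral lborel {0..b} (\<lambda>x::real. exp (- (x\<^sup>2))) = erf b) at_top"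
    using eventually_ge_at_top[of 0]
    by eventually_elim (simp add: erf_def zero_ereal_def interval_integral_Icc)
  ultimately show ?thesis by (rule Lim_transform_eventually)
qed

lemma erf_lim_bot: "(erf \<longlongrightarrow> -1) at_bot"
proof -
  have "((\<lambda>x. - erf (- x)) \<longlongrightarrow> - 1) at_bot"
    by (intro tendsto_minus filterlim_compose[OF erf_lim_top] filterlim_uminus_at_top_at_bot)
  then show ?thesis by (simp add: erf_odd)
qed

lemma nu_fun: "std_normal_density = (\<lambda>t. 1 / sqrt (2 * pi) * exp (- t\<^sup>2 / 2))"
  by (rule ext) (simp add: std_normal_density_def)

lemma nu_deriv: "(std_normal_density has_real_derivative (- t * std_normal_density t)) (at t)"
proof -
  have "((\<lambda>t. 1 / sqrt (2 * pi) * exp (- t\<^sup>2 / 2)) has_real_derivative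
      1 / sqrt (2 * pi) * (exp (- t\<^sup>2 / 2) * (- t))) (at t)"
    by (intro DERIV_cmult) (auto intro!: derivative_eq_intros simp: power2_eq_square)
  then show ?thesis unfolding nu_fun by (simp add: algebra_simps)
qed

lemma half_erf_deriv: "((\<lambda>t. erf (t / sqrt 2) / 2) has_real_derivative std_normal_density t) (at t)"
proof -
  have d: "((\<lambda>t. erf (t / sqrt 2) / 2) has_real_derivative (2 / sqrt pi * exp (- ((t / sqrt 2)\<^sup>2)) * (1 / sqrt 2)) / 2) (at t)"
    by (rule DERIV_cdivide[OF DERIV_chain2[OF erf_deriv DERIV_cdivide[OF DERIV_ident]]])
  have "(2 / sqrt pi * exp (- ((t / sqrt 2)\<^sup>2)) * (1 / sqrt 2)) / 2 = exp (- (t\<^sup>2) / 2) / (sqrt 2 * sqrt pi)"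
    by (simp add: power_divide)
  also have "\<dots> = std_normal_density t"
    by (simp add: std_normal_density_def real_sqrt_mult)
  finally show ?thesis using d by simp
qed

lemma K_formula: "(\<integral>t. std_normal_density t * \<bar>s + t\<bar> \<partial>lborel) = 2 * std_normal_density s + s * erf (s / sqrt 2)"
proof -
  let ?nu = "std_normal_density"
  define f where "f t = ?nu t * (s + t)" for t
  have int1: "integrable lborel (\<lambda>t. ?nu t * t ^ 1)" by (rule integrable_std_normal_moment)
  have intf: "integrable lborel f"
    unfolding f_def distrib_left using int1 by (intro Bochner_Integration.integrable_add) (auto intro: integrable_mult_right)
  have If: "(\<integral>t. f t \<partial>lborel) = s"
  proof -
    have "(\<integral>t. f t \<partial>lborel) = (\<integral>t. s * ?nu t \<partial>lborel) + (\<integral>t. ?nu t * t ^ 1 \<partial>lborel)"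
      unfolding f_def distrib_left using int1
      by (subst Bochner_Integration.integral_add[symmetric]) (auto simp: mult.commute)
    also have "\<dots> = s"
      using integral_std_normal_moment_odd[of 0] by simp
    finally show ?thesis .
  qed
  define F where "F t = s * (erf (t / sqrt 2) / 2) - ?nu t" for t
  have Fd: "(F has_real_derivative f t) (at t)" for t
  proof -
    have "(F has_real_derivative s * ?nu t - (- t * ?nu t)) (at t)"
      unfolding F_def[abs_def] by (intro DERIV_diff DERIV_cmult half_erf_deriv nu_deriv)
    then show ?thesis by (simp add: f_def algebra_simps)
  qed
  have contF: "isCont F t" for t using Fd by (rule DERIV_isCont)
  have contf: "isCont f t" for t unfolding f_def nu_fun by (intro continuous_intros) simp_all
  have seti: "set_integrable lborel (einterval (-\<infinity>) (ereal (-s))) f"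
    unfolding set_integrable_def by (rule integrable_mult_indicator) (auto simp: intf)
  have limA: "((F \<circ> real_of_ereal) \<longlongrightarrow> s * (-1 / 2) - 0) (at_right (-\<infinity>))"
  proof -
    have h1: "((\<lambda>x. erf (x / sqrt 2)) \<longlongrightarrow> -1) at_bot"
      by (rule filterlim_compose[OF erf_lim_bot]) real_asymp
    have h1': "((\<lambda>x. erf (x / sqrt 2) / 2) \<longlongrightarrow> -1 / 2) at_bot"
      using tendsto_divide[OF h1 tendsto_const[of "2::real"]] by simp
    have h2: "(?nu \<longlongrightarrow> 0) at_bot" unfolding nu_fun by real_asymp
    show ?thesis unfolding ereal_tendsto_simps F_def[abs_def]
      by (rule tendsto_diff[OF tendsto_mult_left[OF h1'] h2])
  qed
  have limB: "((F \<circ> real_of_ereal) \<longlongrightarrow> F (-s)) (at_left (ereal (-s)))"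
    unfolding ereal_tendsto_simps using contF[of "-s"]
    by (simp add: isCont_def filterlim_at_split)
  have I: "(LBINT t=-\<infinity>..ereal (-s). f t) = F (-s) - s * (-1 / 2)"
    using interval_integral_FTC_integrable[OF _ _ _ seti limA limB] Fd contf
    by (simp add: has_real_derivative_iff_has_vector_derivative[symmetric])
  have I2: "(LBINT t=-\<infinity>..ereal (-s). f t) = (\<integral>t. indicator {..<-s} t * f t \<partial>lborel)"
    by (simp add: interval_lebesgue_integral_def set_lebesgue_integral_def einterval_def lessThan_def)
  have pw: "?nu t * \<bar>s + t\<bar> = f t - 2 * (indicator {..<-s} t * f t)" for t
    by (auto simp: f_def indicator_def algebra_simps)
  have "(\<integral>t. ?nu t * \<bar>s + t\<bar> \<partial>lborel) = (\<integral>t. f t \<partial>lborel) - 2 * (\<integral>t. indicator {..<-s} t * f t \<partial>lborel)"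
    unfolding pw
    by (subst Bochner_Integration.integral_diff)
       (auto intro!: intf integrable_mult_right integrable_mult_indicator[of _ _ f, simplified])
  also have "\<dots> = s - 2 * (F (-s) - s * (-1 / 2))" using If I I2 by simp
  also have "\<dots> = 2 * ?nu s + s * erf (s / sqrt 2)"
    by (simp add: F_def erf_odd std_normal_density_def algebra_simps)
  finally show ?thesis .
qed

lemma K_formula_lam: "(\<integral>t. std_normal_density t * \<bar>s + t\<bar> \<partial>lborel) = sqrt (2 / pi) * lam s"
proof -
  have e1: "sqrt (2 / pi) * sqrt (pi / 2) = 1"
    by (simp add: real_sqrt_mult[symmetric])
  have e2: "sqrt (2 / pi) = 2 * (1 / sqrt (2 * pi))"
  proof -
    have "sqrt (2 / pi) * sqrt (2 * pi) = sqrt 4"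
      by (simp add: real_sqrt_mult[symmetric])
    also have "sqrt 4 = (2::real)" by (simp add: real_sqrt_four)
    finally have e: "sqrt (2 / pi) * sqrt (2 * pi) = 2" .
    have "sqrt (2 * pi) > 0" by simp
    then show ?thesis using e by (simp add: field_simps)
  qed
  have "sqrt (2 / pi) * lam s = sqrt (2 / pi) * exp (- (s\<^sup>2) / 2) + (sqrt (2 / pi) * sqrt (pi / 2)) * s * erf (s / sqrt 2)"
    by (simp add: lam_def algebra_simps)
  also have "\<dots> = sqrt (2 / pi) * exp (- (s\<^sup>2) / 2) + 1 * s * erf (s / sqrt 2)"
    by (simp only: e1)
  also have "\<dots> = 2 * (1 / sqrt (2 * pi)) * exp (- (s\<^sup>2) / 2) + s * erf (s / sqrt 2)"
    by (simp only: e2 mult_1_left)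
  also have "\<dots> = 2 * std_normal_density s + s * erf (s / sqrt 2)"
    by (simp add: std_normal_density_def)
  finally show ?thesis unfolding K_formula by simp
qed


abbreviation "Phi \<equiv> density lborel std_normal_density"

lemma prob_Phi: "prob_space Phi"
  by (rule prob_space_normal_density) simp

lemma PiM_Phi_density:
  fixes I :: "'i set"
  assumes I: "finite I"
  shows "PiM I (\<lambda>_. Phi) = density (PiM I (\<lambda>_. lborel)) (\<lambda>\<omega>. ennreal (\<Prod>i\<in>I. std_normal_density (\<omega> i)))"
proof -
  interpret PP: product_sigma_finite "\<lambda>_::'i. Phi"
    unfolding product_sigma_finite_def using prob_space_imp_sigma_finite[OF prob_Phi] by simp
  interpret PL: product_sigma_finite "\<lambda>_::'i. lborel :: real measure"
    unfolding product_sigma_finite_def using sigma_finite_lborel by simp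
  have sets_eq: "sets (PiM I (\<lambda>_. Phi)) = sets (PiM I (\<lambda>_. lborel :: real measure))"
    by (rule sets_PiM_cong) auto
  show ?thesis
  proof (rule PP.PiM_eqI[OF I, symmetric])
    show "sets (density (PiM I (\<lambda>_. lborel)) (\<lambda>\<omega>. ennreal (\<Prod>i\<in>I. std_normal_density (\<omega> i)))) = sets (PiM I (\<lambda>_. Phi))"
      using sets_eq by simp
  next
    fix A assume A: "\<And>i. i \<in> I \<Longrightarrow> A i \<in> sets Phi"
    then have A': "\<And>i. i \<in> I \<Longrightarrow> A i \<in> sets (lborel :: real measure)" by simp
    have PiE_sets: "Pi\<^sub>E I A \<in> sets (PiM I (\<lambda>_. lborel :: real measure))"
      using A' by (intro sets_PiM_I_finite I) auto
    have "emeasure (density (PiM I (\<lambda>_. lborel)) (\<lambda>\<omega>. ennreal (\<Prod>i\<in>I. std_normal_density (\<omega> i)))) (Pi\<^sub>E I A)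
        = (\<integral>\<^sup>+ \<omega>. ennreal (\<Prod>i\<in>I. std_normal_density (\<omega> i)) * indicator (Pi\<^sub>E I A) \<omega> \<partial>PiM I (\<lambda>_. lborel))"
      by (rule emeasure_density[OF _ PiE_sets]) measurable
    also have "\<dots> = (\<integral>\<^sup>+ \<omega>. (\<Prod>i\<in>I. ennreal (std_normal_density (\<omega> i) * indicator (A i) (\<omega> i))) \<partial>PiM I (\<lambda>_. lborel))"
    proof (rule nn_integral_cong)
      fix \<omega> assume \<omega>: "\<omega> \<in> space (PiM I (\<lambda>_. lborel :: real measure))"
      then have ext: "\<omega> \<in> extensional I" by (simp add: space_PiM PiE_def)
      have "indicator (Pi\<^sub>E I A) \<omega> = (\<Prod>i\<in>I. indicator (A i) (\<omega> i) :: ennreal)"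
      proof (cases "\<omega> \<in> Pi\<^sub>E I A")
        case True
        then have "\<And>i. i \<in> I \<Longrightarrow> indicator (A i) (\<omega> i) = (1::ennreal)" by (auto simp: PiE_def Pi_def)
        then show ?thesis using True by (simp add: prod.neutral)
      next
        case False
        then obtain i where i: "i \<in> I" "\<omega> i \<notin> A i" using ext by (auto simp: PiE_def Pi_def)
        then have "(\<Prod>i\<in>I. indicator (A i) (\<omega> i) :: ennreal) = 0"
          using I by (intro prod_zero bexI[of _ i]) auto
        then show ?thesis using False by simp
      qed
      then show "ennreal (\<Prod>i\<in>I. std_normal_density (\<omega> i)) * indicator (Pi\<^sub>E I A) \<omega> =
          (\<Prod>i\<in>I. ennreal (std_normal_density (\<omega> i) * indicator (A i) (\<omega> i)))"
        by (simp add: ennreal_mult' prod_ennreal[symmetric] prod.distrib normal_density_nonneg prod_nonneg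
                 ennreal_indicator)
    qed
    also have "\<dots> = (\<Prod>i\<in>I. \<integral>\<^sup>+ x. ennreal (std_normal_density x * indicator (A i) x) \<partial>lborel)"
      by (rule PL.product_nn_integral_prod[OF I, of "\<lambda>i x. ennreal (std_normal_density x * indicator (A i) x)"])
         (use A' in measurable)
    also have "\<dots> = (\<Prod>i\<in>I. emeasure Phi (A i))"
    proof (rule prod.cong[OF refl])
      fix i assume i: "i \<in> I"
      show "(\<integral>\<^sup>+ x. ennreal (std_normal_density x * indicator (A i) x) \<partial>lborel) = emeasure Phi (A i)"
        using A'[OF i] by (subst emeasure_density) (auto simp: ennreal_mult' ennreal_indicator)
    qed
    finally show "emeasure (density (PiM I (\<lambda>_. lborel)) (\<lambda>\<omega>. ennreal (\<Prod>i\<in>I. std_normal_density (\<omega> i)))) (Pi\<^sub>E I A)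
        = (\<Prod>i\<in>I. emeasure Phi (A i))" .
  qed
qed


lemma inner_S_Basis:
  fixes \<omega> :: "'a::euclidean_space \<Rightarrow> real"
  assumes b: "b \<in> Basis"
  shows "(\<Sum>j\<in>Basis. \<omega> j *\<^sub>R j) \<bullet> b = \<omega> b"
proof -
  have "(\<Sum>j\<in>Basis. \<omega> j *\<^sub>R j) \<bullet> b = (\<Sum>j\<in>Basis. \<omega> j * (j \<bullet> b))"
    by (simp add: inner_sum_left)
  also have "\<dots> = (\<Sum>j\<in>Basis. if j = b then \<omega> j else 0)"
    using b by (intro sum.cong) (auto simp: inner_Basis)
  also have "\<dots> = \<omega> b" using b by simp
  finally show ?thesis .
qed

lemma gauss_density_S:
  fixes \<omega> :: "'a::euclidean_space \<Rightarrow> real"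
  shows "std_gauss_density (\<Sum>j\<in>Basis. \<omega> j *\<^sub>R j :: 'a) = (\<Prod>b\<in>Basis. std_normal_density (\<omega> b))"
proof -
  let ?x = "(\<Sum>j\<in>Basis. \<omega> j *\<^sub>R j :: 'a)"
  have n: "(norm ?x)\<^sup>2 = (\<Sum>b\<in>Basis. (\<omega> b)\<^sup>2)"
    unfolding power2_norm_eq_inner by (subst euclidean_inner) (simp add: inner_S_Basis power2_eq_square)
  have c: "(2 * pi) powr (- real DIM('a) / 2) = (1 / sqrt (2 * pi)) ^ DIM('a)"
  proof -
    have "(2 * pi) powr (- real DIM('a) / 2) = inverse (((2 * pi) powr (1 / 2)) powr real DIM('a))"
      by (simp add: powr_powr powr_minus)
    also have "\<dots> = inverse ((sqrt (2 * pi)) ^ DIM('a))"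
      by (simp add: powr_half_sqrt powr_realpow)
    also have "\<dots> = (1 / sqrt (2 * pi)) ^ DIM('a)"
      by (simp add: power_one_over inverse_eq_divide)
    finally show ?thesis .
  qed
  have "(\<Prod>b\<in>Basis. std_normal_density (\<omega> b)) = (\<Prod>b\<in>(Basis::'a set). 1 / sqrt (2 * pi) * exp (- (\<omega> b)\<^sup>2 / 2))"
    by (simp add: std_normal_density_def)
  also have "\<dots> = (\<Prod>b\<in>(Basis::'a set). 1 / sqrt (2 * pi)) * (\<Prod>b\<in>(Basis::'a set). exp (- (\<omega> b)\<^sup>2 / 2))"
    by (rule prod.distrib)
  also have "\<dots> = (1 / sqrt (2 * pi)) ^ DIM('a) * exp (\<Sum>b\<in>(Basis::'a set). - (\<omega> b)\<^sup>2 / 2)"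
    by (simp only: prod_constant exp_sum[OF finite_Basis])
  also have "(\<Sum>b\<in>(Basis::'a set). - (\<omega> b)\<^sup>2 / 2) = - (\<Sum>b\<in>(Basis::'a set). (\<omega> b)\<^sup>2) / 2"
    by (simp add: sum_negf sum_divide_distrib)
  finally show ?thesis
    unfolding std_gauss_density_def n c by simp
qed

lemma gauss_proj:
  fixes u :: "'a::euclidean_space" and g :: "real \<Rightarrow> real"
  assumes u: "u \<noteq> 0" and g[measurable]: "g \<in> borel_measurable borel"
  shows "(\<integral>x. g (u \<bullet> x) * std_gauss_density x \<partial>lborel) =
         (\<integral>t. std_normal_density t * g (norm u * t) \<partial>lborel)"
proof -
  let ?B = "Basis :: 'a set"
  let ?P = "PiM ?B (\<lambda>_. lborel :: real measure)"
  let ?N = "PiM ?B (\<lambda>_. Phi)"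
  let ?S = "\<lambda>\<omega>. (\<Sum>b\<in>?B. \<omega> b *\<^sub>R b) :: 'a"
  have Smeas[measurable]: "?S \<in> ?P \<rightarrow>\<^sub>M borel" by measurable
  have step1: "(\<integral>x. g (u \<bullet> x) * std_gauss_density x \<partial>lborel) =
      (\<integral>\<omega>. g (u \<bullet> ?S \<omega>) * std_gauss_density (?S \<omega>) \<partial>?P)"
    by (subst lborel_eq) (rule integral_distr[OF Smeas], unfold std_gauss_density_def, measurable)
  have step2: "(\<integral>\<omega>. g (u \<bullet> ?S \<omega>) * std_gauss_density (?S \<omega>) \<partial>?P) =
      (\<integral>\<omega>. (\<Prod>b\<in>?B. std_normal_density (\<omega> b)) * g (u \<bullet> ?S \<omega>) \<partial>?P)"
    by (simp add: gauss_density_S mult.commute)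
  have step3: "(\<integral>\<omega>. (\<Prod>b\<in>?B. std_normal_density (\<omega> b)) * g (u \<bullet> ?S \<omega>) \<partial>?P) =
      (\<integral>\<omega>. g (u \<bullet> ?S \<omega>) \<partial>?N)"
    unfolding PiM_Phi_density[OF finite_Basis]
    by (rule integral_real_density[symmetric]) (auto simp: prod_nonneg)
  interpret NP: prob_space ?N by (rule prob_space_PiM) (rule prob_Phi)
  define I where "I = {b\<in>?B. u \<bullet> b \<noteq> 0}"
  have I: "finite I" "I \<subseteq> ?B" by (auto simp: I_def)
  have Ine: "I \<noteq> {}" using u euclidean_all_zero_iff[of u] by (auto simp: I_def inner_commute)
  have comp: "distr ?N Phi (\<lambda>\<omega>. \<omega> b) = Phi" if "b \<in> ?B" for b
    by (rule distr_PiM_component[OF prob_Phi that])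
  have dist1: "distributed ?N lborel (\<lambda>\<omega>. \<omega> b) (normal_density 0 1)" if "b \<in> ?B" for b
  proof -
    have "distr ?N lborel (\<lambda>\<omega>. \<omega> b) = distr ?N Phi (\<lambda>\<omega>. \<omega> b)"
      by (rule distr_cong) auto
    then show ?thesis using comp[OF that] that unfolding distributed_def
      by (auto simp: measurable_component_singleton)
  qed
  have indB: "NP.indep_vars (\<lambda>_. Phi) (\<lambda>b \<omega>. \<omega> b) ?B"
  proof (subst NP.indep_vars_iff_distr_eq_PiM')
    show "distr ?N (PiM ?B (\<lambda>_. Phi)) (\<lambda>x. \<lambda>i\<in>?B. x i) = PiM ?B (\<lambda>i. distr ?N Phi (\<lambda>\<omega>. \<omega> i))"
    proof -
      have "distr ?N (PiM ?B (\<lambda>_. Phi)) (\<lambda>x. \<lambda>i\<in>?B. x i) = distr ?N ?N (\<lambda>x. x)"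
        by (rule distr_cong) (auto simp: space_PiM)
      also have "\<dots> = ?N" by simp
      also have "\<dots> = PiM ?B (\<lambda>i. distr ?N Phi (\<lambda>\<omega>. \<omega> i))"
        by (rule PiM_cong) (auto simp: comp)
      finally show ?thesis .
    qed
  qed (auto simp: measurable_component_singleton)
  have indI: "NP.indep_vars (\<lambda>_. borel) (\<lambda>b \<omega>. (u \<bullet> b) * \<omega> b) I"
    using NP.indep_vars_compose2[OF NP.indep_vars_subset[OF indB I(2)], of "\<lambda>b t. (u \<bullet> b) * t" "\<lambda>_. borel"]
    by simp
  have distI: "distributed ?N lborel (\<lambda>\<omega>. (u \<bullet> b) * \<omega> b) (normal_density 0 \<bar>u \<bullet> b\<bar>)" if "b \<in> I" for b
  proof -
    have "b \<in> ?B" "u \<bullet> b \<noteq> 0" using that by (auto simp: I_def)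
    from NP.normal_density_affine[OF dist1[OF this(1)] _ this(2), of 0]
    show ?thesis by simp
  qed
  have distsum: "distributed ?N lborel (\<lambda>\<omega>. \<Sum>b\<in>I. (u \<bullet> b) * \<omega> b)
      (normal_density (\<Sum>b\<in>I. 0) (sqrt (\<Sum>b\<in>I. (\<bar>u \<bullet> b\<bar>)\<^sup>2)))"
    by (rule NP.sum_indep_normal[OF I(1) Ine indI _ distI]) (auto simp: I_def)
  have sq: "sqrt (\<Sum>b\<in>I. (\<bar>u \<bullet> b\<bar>)\<^sup>2) = norm u"
  proof -
    have "(\<Sum>b\<in>I. (\<bar>u \<bullet> b\<bar>)\<^sup>2) = (\<Sum>b\<in>?B. (u \<bullet> b)\<^sup>2)"
      unfolding power2_abs by (rule sum.mono_neutral_left) (auto simp: I_def)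
    also have "\<dots> = u \<bullet> u" by (subst euclidean_inner[of u u]) (simp add: power2_eq_square)
    finally show ?thesis by (simp add: norm_eq_sqrt_inner)
  qed
  have uS: "u \<bullet> ?S \<omega> = (\<Sum>b\<in>I. (u \<bullet> b) * \<omega> b)" for \<omega>
  proof -
    have "u \<bullet> ?S \<omega> = (\<Sum>b\<in>?B. (u \<bullet> b) * \<omega> b)" by (simp add: inner_sum_right mult.commute)
    also have "\<dots> = (\<Sum>b\<in>I. (u \<bullet> b) * \<omega> b)"
      by (rule sum.mono_neutral_right) (auto simp: I_def)
    finally show ?thesis .
  qed
  have distu: "distributed ?N lborel (\<lambda>\<omega>. u \<bullet> ?S \<omega>) (normal_density 0 (norm u))"
    using distsum unfolding uS sq by simp
  have step4: "(\<integral>\<omega>. g (u \<bullet> ?S \<omega>) \<partial>?N) = (\<integral>t. normal_density 0 (norm u) t * g t \<partial>lborel)"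
    by (rule distributed_integral[OF distu, symmetric]) auto
  have step5: "(\<integral>t. normal_density 0 (norm u) t * g t \<partial>lborel) =
      (\<integral>t. std_normal_density t * g (norm u * t) \<partial>lborel)"
  proof -
    have nu: "norm u > 0" using u by simp
    have "(\<integral>t. normal_density 0 (norm u) t * g t \<partial>lborel) =
        \<bar>norm u\<bar> *\<^sub>R (\<integral>t. normal_density 0 (norm u) (0 + norm u * t) * g (0 + norm u * t) \<partial>lborel)"
      by (rule lborel_integral_real_affine) (use nu in simp)
    also have "\<dots> = (\<integral>t. norm u * (normal_density 0 (norm u) (norm u * t) * g (norm u * t)) \<partial>lborel)"
      using nu by simp
    also have "\<dots> = (\<integral>t. std_normal_density t * g (norm u * t) \<partial>lborel)"
    proof (rule Bochner_Integration.integral_cong[OF refl])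
      fix t
      have "norm u * normal_density 0 (norm u) (norm u * t) = std_normal_density t"
        using nu by (simp add: normal_density_def real_sqrt_mult power_mult_distrib field_simps)
      then show "norm u * (normal_density 0 (norm u) (norm u * t) * g (norm u * t)) =
          std_normal_density t * g (norm u * t)" by (simp add: mult.assoc[symmetric])
    qed
    finally show ?thesis .
  qed
  show ?thesis using step1 step2 step3 step4 step5 by simp
qed


lemma ellip_vol_cart:
  fixes c :: "real^'n::{finite,wellorder}"
  assumes sg: "0 < \<sigma>"
  shows "measure lebesgue ((\<lambda>y. \<sigma> *\<^sub>R (y + (\<mu> * (y \<bullet> c)) *\<^sub>R c)) ` cball 0 1) =
         \<bar>\<sigma> ^ CARD('n) * (1 + \<mu> * (norm c)\<^sup>2)\<bar> * measure lebesgue (cball (0::real^'n::{finite,wellorder}) 1)"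
proof -
  define k :: 'n where "k = undefined"
  define e :: "real^'n::{finite,wellorder}" where "e = axis k 1"
  define r where "r = norm c"
  have ne: "norm e = 1" by (simp add: e_def)
  have "norm (r *\<^sub>R e) = norm c" by (simp add: ne r_def)
  then obtain R where R: "orthogonal_transformation R" "R (r *\<^sub>R e) = c"
    by (rule orthogonal_transformation_exists)
  have linR: "linear R" using R(1) by (rule orthogonal_transformation_linear)
  define m where "m i = \<sigma> * (if i = k then 1 + \<mu> * r\<^sup>2 else 1)" for i
  define D where "D y = (\<chi> i. m i * y $ i)" for y :: "real^'n::{finite,wellorder}"
  have Dform: "D z = \<sigma> *\<^sub>R (z + (\<mu> * r\<^sup>2 * (z $ k)) *\<^sub>R e)" for z
    by (auto simp: D_def m_def e_def vec_eq_iff axis_def algebra_simps)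
  have key: "\<sigma> *\<^sub>R (y + (\<mu> * (y \<bullet> c)) *\<^sub>R c) = R (D (inv R y))" for y
  proof -
    define z where "z = inv R y"
    have Rz: "R z = y" unfolding z_def using orthogonal_transformation_surj[OF R(1)]
      by (simp add: surj_f_inv_f)
    have "z \<bullet> (r *\<^sub>R e) = R z \<bullet> R (r *\<^sub>R e)"
      using R(1) by (simp add: orthogonal_transformation_def)
    then have zk: "r * (z $ k) = y \<bullet> c" using Rz R(2) by (simp add: e_def inner_axis)
    have "R (D z) = \<sigma> *\<^sub>R (R z + (\<mu> * r\<^sup>2 * (z $ k)) *\<^sub>R R e)"
      unfolding Dform using linR by (simp add: linear_add linear_scale)
    also have "(\<mu> * r\<^sup>2 * (z $ k)) *\<^sub>R R e = (\<mu> * (r * z $ k)) *\<^sub>R R (r *\<^sub>R e)"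
      using linR by (simp add: linear_scale power2_eq_square)
    also have "\<dots> = (\<mu> * (y \<bullet> c)) *\<^sub>R c" using zk R(2) by simp
    finally show ?thesis using Rz z_def by simp
  qed
  have img: "(\<lambda>y. \<sigma> *\<^sub>R (y + (\<mu> * (y \<bullet> c)) *\<^sub>R c)) ` cball 0 1 = R ` (D ` (inv R ` cball 0 1))"
    unfolding key by (simp add: image_image)
  have invc: "inv R ` cball 0 1 = cball (0::real^'n::{finite,wellorder}) 1"
    using image_orthogonal_transformation_cball[OF orthogonal_transformation_inv[OF R(1)], of 0 1]
      linear_0[OF orthogonal_transformation_linear[OF orthogonal_transformation_inv[OF R(1)]]]
    by simp
  have cm: "cball (0::real^'n::{finite,wellorder}) 1 \<in> lmeasurable" by (simp add: lmeasurable_cball)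
  have Dm: "D ` cball 0 1 \<in> lmeasurable" unfolding D_def by (rule measurable_stretch[OF cm])
  have "measure lebesgue ((\<lambda>y. \<sigma> *\<^sub>R (y + (\<mu> * (y \<bullet> c)) *\<^sub>R c)) ` cball 0 1) = measure lebesgue (D ` cball 0 1)"
    unfolding img invc by (rule measure_orthogonal_image[OF R(1) Dm])
  also have "\<dots> = \<bar>prod m UNIV\<bar> * measure lebesgue (cball (0::real^'n::{finite,wellorder}) 1)"
    unfolding D_def by (rule measure_stretch[OF cm])
  also have "prod m UNIV = \<sigma> ^ CARD('n) * (1 + \<mu> * (norm c)\<^sup>2)"
    by (simp add: m_def prod.distrib r_def)
  finally show ?thesis .
qed


lemma Basis_vec_real: "(Basis :: (real^'n) set) = range (\<lambda>i. axis i 1)"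
  by (auto simp: Basis_vec_def)

lemma prod_Basis_vec: "(\<Prod>b\<in>(Basis :: (real^'n) set). f b) = (\<Prod>i\<in>UNIV. f (axis i 1))"
  unfolding Basis_vec_real
  by (subst prod.reindex) (auto simp: inj_on_def axis_eq_axis)

lemma ellip_vol:
  fixes c :: "'a::euclidean_space"
  assumes sg: "0 < \<sigma>"
  shows "measure lborel ((\<lambda>y. \<sigma> *\<^sub>R (y + (\<mu> * (y \<bullet> c)) *\<^sub>R c)) ` cball 0 1) =
         \<bar>\<sigma> ^ DIM('a) * (1 + \<mu> * (norm c)\<^sup>2)\<bar> * measure lborel (cball (0::'a) 1)"
proof -
  have "finite (UNIV :: 'a dimidx set)" "finite (Basis :: 'a set)" "card (UNIV :: 'a dimidx set) = card (Basis :: 'a set)"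
    by (auto simp: card_dimidx)
  then obtain h :: "'a dimidx \<Rightarrow> 'a" where h: "bij_betw h UNIV Basis"
    using finite_same_card_bij by blast
  have hB: "h i \<in> Basis" for i using h by (auto simp: bij_betw_def)
  have hinj: "h i = h j \<longleftrightarrow> i = j" for i j using h by (auto simp: bij_betw_def inj_on_def)
  have hh: "h i \<bullet> h j = (if i = j then 1 else 0)" for i j
    using hB hinj by (auto simp: inner_Basis)
  have Bimg: "Basis = range h" using h by (auto simp: bij_betw_def)
  define T :: "'a \<Rightarrow> real^'a dimidx" where "T x = (\<chi> i. x \<bullet> h i)" for x
  define Ti :: "real^'a dimidx \<Rightarrow> 'a" where "Ti v = (\<Sum>i\<in>UNIV. v $ i *\<^sub>R h i)" for v
  have Ti_inner: "Ti v \<bullet> h i = v $ i" for v i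
  proof -
    have "Ti v \<bullet> h i = (\<Sum>j\<in>UNIV. v $ j * (h j \<bullet> h i))" by (simp add: Ti_def inner_sum_left)
    also have "\<dots> = (\<Sum>j\<in>UNIV. if j = i then v $ j else 0)" by (intro sum.cong) (auto simp: hh)
    finally show ?thesis by simp
  qed
  have TTi: "T (Ti v) = v" for v by (simp add: T_def vec_eq_iff Ti_inner)
  have sum_h: "(\<Sum>i\<in>UNIV. f (h i)) = (\<Sum>b\<in>Basis. f b)" for f :: "'a \<Rightarrow> 'b::comm_monoid_add"
    using sum.reindex_bij_betw[OF h] .
  have prod_h: "(\<Prod>i\<in>UNIV. f (h i)) = (\<Prod>b\<in>Basis. f b)" for f :: "'a \<Rightarrow> 'b::comm_monoid_mult"
    using prod.reindex_bij_betw[OF h] .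
  have TiT: "Ti (T x) = x" for x
    unfolding Ti_def T_def using sum_h[of "\<lambda>b. (x \<bullet> b) *\<^sub>R b"] by (simp add: euclidean_representation)
  have Tinner: "T x \<bullet> T y = x \<bullet> y" for x y
    unfolding T_def inner_vec_def using sum_h[of "\<lambda>b. (x \<bullet> b) * (y \<bullet> b)"]
    by (simp add: euclidean_inner[of x y])
  have Tnorm: "norm (T x) = norm x" for x by (simp add: norm_eq_sqrt_inner Tinner)
  have linT: "linear T" unfolding T_def by (auto simp: linear_iff vec_eq_iff inner_add_left)
  have linTi: "linear Ti" unfolding Ti_def by (auto simp: linear_iff scaleR_add_left sum.distrib scaleR_sum_right)
  have contT: "continuous_on UNIV T" by (rule linear_continuous_on[OF linear_conv_bounded_linear[THEN iffD1, OF linT]])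
  have contTi: "continuous_on UNIV Ti" by (rule linear_continuous_on[OF linear_conv_bounded_linear[THEN iffD1, OF linTi]])
  have measT[measurable]: "T \<in> borel_measurable borel" by (rule borel_measurable_continuous_onI[OF contT])
  have measTi[measurable]: "Ti \<in> borel_measurable borel" by (rule borel_measurable_continuous_onI[OF contTi])
  have distrT: "distr lborel borel T = lborel"
  proof (rule lborel_eqI[symmetric])
    fix l u :: "real^'a dimidx"
    assume le: "\<And>b. b \<in> Basis \<Longrightarrow> l \<bullet> b \<le> u \<bullet> b"
    have le': "l $ i \<le> u $ i" for i using le[of "axis i 1"] by (simp add: Basis_vec_real inner_axis)
    have pre: "T -` box l u = box (Ti l) (Ti u)"
    proof -
      have "x \<in> box (Ti l) (Ti u) \<longleftrightarrow> (\<forall>i. l $ i < x \<bullet> h i \<and> x \<bullet> h i < u $ i)" for x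
        unfolding mem_box Bimg by (auto simp: Ti_inner)
      then show ?thesis by (auto simp: mem_box_cart T_def)
    qed
    have "emeasure (distr lborel borel T) (box l u) = emeasure lborel (box (Ti l) (Ti u))"
      by (subst emeasure_distr) (auto simp: pre)
    also have "\<dots> = (\<Prod>b\<in>Basis. (Ti u - Ti l) \<bullet> b)"
      by (rule emeasure_lborel_box) (auto simp: Bimg Ti_inner le')
    also have "\<dots> = (\<Prod>i\<in>UNIV. (u $ i - l $ i))"
      using prod_h[of "\<lambda>b. (Ti u - Ti l) \<bullet> b"] by (simp add: inner_diff_left Ti_inner)
    also have "\<dots> = (\<Prod>b\<in>Basis. (u - l) \<bullet> b)"
      by (simp add: prod_Basis_vec inner_axis)
    finally show "emeasure (distr lborel borel T) (box l u) = (\<Prod>b\<in>Basis. (u - l) \<bullet> b)" .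
  qed simp
  have Timg: "T ` A = Ti -` A" for A
    using TTi TiT by (auto simp: image_iff) (metis)
  have measure_T: "measure lborel (T ` A) = measure lborel A" if A: "A \<in> sets borel" for A
  proof -
    have TA: "T ` A \<in> sets borel" unfolding Timg using measurable_sets[OF measTi A] by simp
    have "measure lborel (T ` A) = measure (distr lborel borel T) (T ` A)" by (simp add: distrT)
    also have "\<dots> = measure lborel (T -` (T ` A) \<inter> space lborel)"
      by (rule measure_distr) (auto simp: TA)
    also have "T -` (T ` A) \<inter> space lborel = A"
      using TiT by (auto simp: image_iff) (metis)
    finally show ?thesis .
  qed
  define L where "L y = \<sigma> *\<^sub>R (y + (\<mu> * (y \<bullet> c)) *\<^sub>R c)" for y
  define L' where "L' y = \<sigma> *\<^sub>R (y + (\<mu> * (y \<bullet> T c)) *\<^sub>R T c)" for y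
  have linL: "linear L" unfolding L_def by (auto simp: linear_iff algebra_simps inner_add_left)
  have linL': "linear L'" unfolding L'_def by (auto simp: linear_iff algebra_simps inner_add_left)
  have TL: "T (L x) = L' (T x)" for x
    unfolding L_def L'_def using linT by (simp add: linear_add linear_scale Tinner)
  have Tcball: "T ` cball 0 1 = cball 0 1"
  proof
    show "T ` cball 0 1 \<subseteq> cball 0 1" by (auto simp: Tnorm)
    show "cball 0 1 \<subseteq> T ` cball 0 1"
    proof
      fix v :: "real^'a dimidx" assume "v \<in> cball 0 1"
      then have "Ti v \<in> cball 0 1" using Tnorm[of "Ti v"] by (simp add: TTi)
      then show "v \<in> T ` cball 0 1" using TTi[of v] by (metis image_eqI)
    qed
  qed
  have img: "T ` (L ` cball 0 1) = L' ` cball 0 1"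
  proof -
    have "T ` (L ` cball 0 1) = L' ` (T ` cball 0 1)" by (simp add: image_image TL)
    then show ?thesis by (simp add: Tcball)
  qed
  have compL: "compact (L ` cball 0 1)"
    by (rule compact_continuous_image[OF linear_continuous_on[OF linear_conv_bounded_linear[THEN iffD1, OF linL]] compact_cball])
  have compL': "compact (L' ` cball 0 1)"
    by (rule compact_continuous_image[OF linear_continuous_on[OF linear_conv_bounded_linear[THEN iffD1, OF linL']] compact_cball])
  have "measure lborel (L ` cball 0 1) = measure lborel (T ` (L ` cball 0 1))"
    by (rule measure_T[symmetric]) (simp add: compL compact_imp_closed)
  also have "\<dots> = measure lebesgue (L' ` cball 0 1)"
    unfolding img by (simp add: measure_completion compL' compact_imp_closed)
  also have "\<dots> = \<bar>\<sigma> ^ CARD('a dimidx) * (1 + \<mu> * (norm (T c))\<^sup>2)\<bar> * measure lebesgue (cball (0::real^'a dimidx) 1)"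
    unfolding L'_def by (rule ellip_vol_cart[OF sg])
  also have "measure lebesgue (cball (0::real^'a dimidx) 1) = measure lborel (cball (0::real^'a dimidx) 1)"
    by (simp add: measure_completion)
  also have "\<dots> = measure lborel (T ` cball (0::'a) 1)" by (simp add: Tcball)
  also have "\<dots> = measure lborel (cball (0::'a) 1)" by (rule measure_T) simp
  finally show ?thesis unfolding L_def by (simp add: card_dimidx Tnorm)
qed


lemma Gs_zero [simp]: "G_support c 0 = 0"
  by (simp add: G_support_def)

lemma half_sqrt: "1 / 2 * sqrt (2 / pi) = 1 / sqrt (2 * pi)"
proof -
  have "sqrt (2 / pi) * sqrt (2 * pi) = sqrt 4"
    by (simp add: real_sqrt_mult[symmetric])
  also have "sqrt 4 = (2::real)" by (simp add: real_sqrt_four)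
  finally have e: "sqrt (2 / pi) * sqrt (2 * pi) = 2" .
  have "sqrt (2 * pi) > 0" by simp
  then show ?thesis using e by (simp add: field_simps)
qed

lemma Gs_formula:
  fixes c u :: "'a::euclidean_space"
  assumes u: "u \<noteq> 0"
  shows "G_support c u = norm u * lam ((u \<bullet> c) / norm u) / sqrt (2 * pi)"
proof -
  let ?a = "u \<bullet> c"
  have nu: "norm u > 0" using u by simp
  have "(\<integral>x. \<bar>u \<bullet> (c + x)\<bar> * std_gauss_density x \<partial>lborel) =
        (\<integral>x. (\<lambda>t. \<bar>?a + t\<bar>) (u \<bullet> x) * std_gauss_density x \<partial>lborel)"
    by (simp add: inner_add_right)
  also have "\<dots> = (\<integral>t. std_normal_density t * \<bar>?a + norm u * t\<bar> \<partial>lborel)"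
    by (rule gauss_proj[OF u]) simp
  also have "\<dots> = (\<integral>t. norm u * (std_normal_density t * \<bar>?a / norm u + t\<bar>) \<partial>lborel)"
  proof (rule Bochner_Integration.integral_cong[OF refl])
    fix t
    have "?a + norm u * t = norm u * (?a / norm u + t)" using nu by (simp add: field_simps)
    then have "\<bar>?a + norm u * t\<bar> = norm u * \<bar>?a / norm u + t\<bar>" by (simp add: abs_mult)
    then show "std_normal_density t * \<bar>?a + norm u * t\<bar> = norm u * (std_normal_density t * \<bar>?a / norm u + t\<bar>)"
      by simp
  qed
  also have "\<dots> = norm u * (\<integral>t. std_normal_density t * \<bar>?a / norm u + t\<bar> \<partial>lborel)"
    by (rule integral_mult_right_zero)
  also have "\<dots> = norm u * (sqrt (2 / pi) * lam (?a / norm u))"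
    by (simp add: K_formula_lam)
  finally have "G_support c u = 1 / 2 * (norm u * (sqrt (2 / pi) * lam (?a / norm u)))"
    by (simp add: G_support_def)
  also have "\<dots> = (1 / 2 * sqrt (2 / pi)) * norm u * lam (?a / norm u)" by simp
  also have "\<dots> = norm u * lam (?a / norm u) / sqrt (2 * pi)" unfolding half_sqrt by simp
  finally show ?thesis .
qed

lemma Gs_nonneg: "0 \<le> G_support c u"
  by (cases "u = 0") (auto simp: Gs_formula intro!: divide_nonneg_pos mult_nonneg_nonneg less_imp_le[OF lam_pos])


theorem corollary2p11:
  fixes c :: "'a::euclidean_space"
  defines "m \<equiv> DIM('a)"
  defines "\<kappa> \<equiv> measure lborel (ball (0::'a) 1)"
  shows "b_inf ^ m * (lam (norm c) / (2 * pi) powr (real m / 2)) * \<kappa> \<le> measure lborel (G_zonoid c)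
       \<and> measure lborel (G_zonoid c) \<le> lam (norm c) / (2 * pi) powr (real m / 2) * \<kappa>"
proof -
  define r where "r = norm c"
  define \<mu> where "\<mu> = (lam r - 1) / r\<^sup>2"
  define s0 where "s0 = 1 / sqrt (2 * pi)"
  define b where "b = b_inf"
  define L where "L \<sigma> y = \<sigma> *\<^sub>R (y + (\<mu> * (y \<bullet> c)) *\<^sub>R c)" for \<sigma> and y :: 'a
  have s0: "0 < s0" by (simp add: s0_def)
  have b0: "0 \<le> b" by (simp add: b_def b_inf_nonneg)
  have r0: "0 \<le> r" by (simp add: r_def)
  have lamr: "lam r = 1 + \<mu> * r\<^sup>2"
  proof (cases "r = 0")
    case True then show ?thesis by simp
  next
    case False then show ?thesis by (simp add: \<mu>_def)
  qed
  have kq_eq: "kq r * (y \<bullet> c)\<^sup>2 = (2 * \<mu> + \<mu>\<^sup>2 * r\<^sup>2) * (y \<bullet> c)\<^sup>2" for y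
  proof (cases "r = 0")
    case True then have "c = 0" by (simp add: r_def)
    then show ?thesis by simp
  next
    case False
    have "kq r = ((1 + \<mu> * r\<^sup>2)\<^sup>2 - 1) / r\<^sup>2" by (simp add: kq_def lamr)
    also have "\<dots> = 2 * \<mu> + \<mu>\<^sup>2 * r\<^sup>2" using False by (simp add: field_simps power2_eq_square)
    finally show ?thesis by simp
  qed
  have normL: "(norm (L \<sigma> y))\<^sup>2 = \<sigma>\<^sup>2 * ((norm y)\<^sup>2 + kq r * (y \<bullet> c)\<^sup>2)" for \<sigma> y
  proof -
    have "(norm (y + (\<mu> * (y \<bullet> c)) *\<^sub>R c))\<^sup>2 = (norm y)\<^sup>2 + 2 * \<mu> * (y \<bullet> c)\<^sup>2 + \<mu>\<^sup>2 * (y \<bullet> c)\<^sup>2 * r\<^sup>2"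
      unfolding power2_norm_eq_inner r_def
      by (simp add: inner_add_left inner_add_right algebra_simps power2_eq_square inner_commute[of c y])
    then show ?thesis unfolding L_def norm_scaleR power_mult_distrib power2_abs kq_eq
      by (simp add: algebra_simps)
  qed
  have Lsym: "L \<sigma> y \<bullet> z = y \<bullet> L \<sigma> z" for \<sigma> y z
    by (simp add: L_def inner_add_left inner_add_right algebra_simps inner_commute)
  have Lscale: "L (b * \<sigma>) y = b *\<^sub>R L \<sigma> y" for \<sigma> y by (simp add: L_def)
  have linL: "linear (L \<sigma>)" for \<sigma>
    by (auto simp: L_def linear_iff algebra_simps inner_add_left)
  have lampos: "0 < lam r" by (rule lam_pos)
  have injL: "inj (L s0)"
  proof (rule linear_inj_on_iff_eq_0[THEN iffD2, OF linL, of UNIV, simplified], intro allI impI)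
    fix y assume "L s0 y = 0"
    then have y0: "y + (\<mu> * (y \<bullet> c)) *\<^sub>R c = 0" using s0 by (simp add: L_def)
    then have "(y + (\<mu> * (y \<bullet> c)) *\<^sub>R c) \<bullet> c = 0" by simp
    then have "(y \<bullet> c) * (1 + \<mu> * r\<^sup>2) = 0"
      by (simp add: inner_add_left r_def power2_norm_eq_inner algebra_simps)
    then have "y \<bullet> c = 0" using lampos lamr by simp
    then show "y = 0" using y0 by simp
  qed
  have surjL: "surj (L s0)" by (simp add: linear_injective_imp_surjective linL injL)
  have hup: "G_support c v \<le> norm (L s0 v)" for v
  proof (cases "v = 0")
    case True then show ?thesis by simp
  next
    case False
    define \<sigma> where "\<sigma> = (v \<bullet> c) / norm v"
    have nv: "norm v > 0" using False by simp
    have "\<bar>v \<bullet> c\<bar> \<le> norm v * r" unfolding r_def by (rule Cauchy_Schwarz_ineq2)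
    then have "\<bar>\<sigma>\<bar> \<le> r" using nv by (simp add: \<sigma>_def abs_div divide_le_eq mult.commute)
    then have l: "(lam \<sigma>)\<^sup>2 \<le> 1 + kq r * \<sigma>\<^sup>2" by (rule lam_sq_le)
    have a: "v \<bullet> c = norm v * \<sigma>" using nv by (simp add: \<sigma>_def)
    have "(G_support c v)\<^sup>2 = s0\<^sup>2 * ((norm v)\<^sup>2 * (lam \<sigma>)\<^sup>2)"
      using False by (simp add: Gs_formula \<sigma>_def s0_def power_mult_distrib power_divide)
    also have "\<dots> \<le> s0\<^sup>2 * ((norm v)\<^sup>2 * (1 + kq r * \<sigma>\<^sup>2))"
      using l by (intro mult_left_mono) auto
    also have "\<dots> = (norm (L s0 v))\<^sup>2"
      unfolding normL a by (simp add: algebra_simps power_mult_distrib)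
    finally show ?thesis by (rule power2_le_imp_le) simp
  qed
  have hlow: "b * norm (L s0 v) \<le> G_support c v" for v
  proof (cases "v = 0")
    case True then show ?thesis by (simp add: L_def)
  next
    case False
    define \<sigma> where "\<sigma> = (v \<bullet> c) / norm v"
    have nv: "norm v > 0" using False by simp
    have a: "v \<bullet> c = norm v * \<sigma>" using nv by (simp add: \<sigma>_def)
    have kqle: "kq r \<le> pi / 2"
    proof (cases "r = 0")
      case True then show ?thesis by (simp add: kq_def)
    next
      case False then show ?thesis using r0 by (intro kq_le) simp
    qed
    have q: "0 < 1 + pi * \<sigma>\<^sup>2 / 2" by (simp add: add_pos_nonneg)
    have "b \<le> lam \<sigma> / sqrt (1 + pi * \<sigma>\<^sup>2 / 2)" unfolding b_def by (rule b_inf_le)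
    then have "b * sqrt (1 + pi * \<sigma>\<^sup>2 / 2) \<le> lam \<sigma>" using q by (simp add: le_divide_eq)
    then have "(b * sqrt (1 + pi * \<sigma>\<^sup>2 / 2))\<^sup>2 \<le> (lam \<sigma>)\<^sup>2"
      using b0 q by (intro power_mono) auto
    then have bl: "b\<^sup>2 * (1 + pi * \<sigma>\<^sup>2 / 2) \<le> (lam \<sigma>)\<^sup>2"
      using q by (simp add: power_mult_distrib)
    have "kq r * \<sigma>\<^sup>2 \<le> pi / 2 * \<sigma>\<^sup>2" using kqle by (rule mult_right_mono) simp
    then have "b\<^sup>2 * (1 + kq r * \<sigma>\<^sup>2) \<le> b\<^sup>2 * (1 + pi * \<sigma>\<^sup>2 / 2)"
      by (intro mult_left_mono) auto
    also note bl
    finally have bl2: "b\<^sup>2 * (1 + kq r * \<sigma>\<^sup>2) \<le> (lam \<sigma>)\<^sup>2" .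
    have "(b * norm (L s0 v))\<^sup>2 = s0\<^sup>2 * ((norm v)\<^sup>2 * (b\<^sup>2 * (1 + kq r * \<sigma>\<^sup>2)))"
      unfolding power_mult_distrib[of b] normL a by (simp add: algebra_simps power_mult_distrib)
    also have "\<dots> \<le> s0\<^sup>2 * ((norm v)\<^sup>2 * (lam \<sigma>)\<^sup>2)"
      using bl2 by (intro mult_left_mono) auto
    also have "\<dots> = (G_support c v)\<^sup>2"
      using False by (simp add: Gs_formula \<sigma>_def s0_def power_mult_distrib power_divide)
    finally show ?thesis by (rule power2_le_imp_le) (simp add: Gs_nonneg)
  qed
  have upper_sub: "G_zonoid c \<subseteq> L s0 ` cball 0 1"
  proof
    fix x assume x: "x \<in> G_zonoid c"
    obtain y where y: "L s0 y = x" using surjL by (metis surjD)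
    obtain v where v: "L s0 v = y" using surjL by (metis surjD)
    have "y \<bullet> y = v \<bullet> x" using Lsym[of s0 v y] y v by simp
    also have "v \<bullet> x \<le> G_support c v" using x by (simp add: G_zonoid_def)
    also have "\<dots> \<le> norm y" using hup[of v] v by simp
    finally have "(norm y)\<^sup>2 \<le> norm y" by (simp add: power2_norm_eq_inner)
    then have "norm y * norm y \<le> 1 * norm y" by (simp add: power2_eq_square)
    then have "norm y \<le> 1"
      by (cases "norm y = 0") (auto simp: mult_le_cancel_right)
    then show "x \<in> L s0 ` cball 0 1" using y by auto
  qed
  have lower_sub: "L (b * s0) ` cball 0 1 \<subseteq> G_zonoid c"
  proof
    fix x assume "x \<in> L (b * s0) ` cball 0 1"
    then obtain y where y: "norm y \<le> 1" "x = L (b * s0) y" by auto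
    show "x \<in> G_zonoid c" unfolding G_zonoid_def
    proof (intro CollectI allI)
      fix u
      have "u \<bullet> x = L (b * s0) u \<bullet> y" using Lsym[of "b * s0" u y] y(2) by simp
      also have "\<dots> \<le> norm (L (b * s0) u) * norm y" by (rule norm_cauchy_schwarz)
      also have "\<dots> \<le> norm (L (b * s0) u)" using y(1) by (simp add: mult_left_le)
      also have "\<dots> = b * norm (L s0 u)" using b0 by (simp add: Lscale)
      also have "\<dots> \<le> G_support c u" by (rule hlow)
      finally show "u \<bullet> x \<le> G_support c u" .
    qed
  qed
  have compE: "compact (L \<sigma> ` cball 0 1)" for \<sigma>
    by (rule compact_continuous_image[OF linear_continuous_on[OF linear_conv_bounded_linear[THEN iffD1, OF linL]] compact_cball])
  have Gclosed: "closed (G_zonoid c)"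
  proof -
    have "G_zonoid c = (\<Inter>u. {x. u \<bullet> x \<le> G_support c u})" by (auto simp: G_zonoid_def)
    also have "closed \<dots>"
      by (intro closed_INT ballI closed_Collect_le continuous_intros)
    finally show ?thesis .
  qed
  have Gcompact: "compact (G_zonoid c)"
    using Gclosed bounded_subset[OF compact_imp_bounded[OF compE] upper_sub]
    by (simp add: compact_eq_bounded_closed)
  have kap: "\<kappa> = measure lborel (cball (0::'a) 1)"
    by (simp add: \<kappa>_def content_ball content_cball)
  have vol: "measure lborel (L \<sigma> ` cball 0 1) = \<sigma> ^ m * lam r * \<kappa>" if "0 < \<sigma>" for \<sigma>
  proof -
    have "measure lborel (L \<sigma> ` cball 0 1) = \<bar>\<sigma> ^ DIM('a) * (1 + \<mu> * (norm c)\<^sup>2)\<bar> * measure lborel (cball (0::'a) 1)"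
      unfolding L_def by (rule ellip_vol[OF that])
    also have "\<bar>\<sigma> ^ DIM('a) * (1 + \<mu> * (norm c)\<^sup>2)\<bar> = \<sigma> ^ m * lam r"
    proof -
      have e: "1 + \<mu> * (norm c)\<^sup>2 = lam r" using lamr by (simp add: r_def)
      show ?thesis unfolding e using that lampos by (simp add: m_def abs_mult)
    qed
    finally show ?thesis by (simp add: kap)
  qed
  have s0m: "s0 ^ m = 1 / (2 * pi) powr (real m / 2)"
  proof -
    have "(2 * pi) powr (real m / 2) = ((2 * pi) powr (1 / 2)) powr real m"
      by (simp add: powr_powr)
    also have "\<dots> = (sqrt (2 * pi)) ^ m" by (simp add: powr_half_sqrt powr_realpow)
    finally show ?thesis by (simp add: s0_def power_one_over)
  qed
  have up: "measure lborel (G_zonoid c) \<le> lam (norm c) / (2 * pi) powr (real m / 2) * \<kappa>"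
  proof -
    have "measure lborel (G_zonoid c) \<le> measure lborel (L s0 ` cball 0 1)"
      by (rule measure_mono_fmeasurable[OF upper_sub])
         (auto intro: fmeasurable_compact[OF compE] borel_closed Gclosed)
    also have "\<dots> = s0 ^ m * lam r * \<kappa>" by (rule vol[OF s0])
    finally show ?thesis by (simp add: s0m r_def)
  qed
  have low: "b_inf ^ m * (lam (norm c) / (2 * pi) powr (real m / 2)) * \<kappa> \<le> measure lborel (G_zonoid c)"
  proof (cases "b = 0")
    case True
    have "m \<noteq> 0" by (simp add: m_def)
    then have bm: "b_inf ^ m = 0" using True by (simp add: b_def)
    show ?thesis unfolding bm by simp
  next
    case False
    then have bp: "0 < b" using b0 by simp
    have "b_inf ^ m * (lam (norm c) / (2 * pi) powr (real m / 2)) * \<kappa> = (b * s0) ^ m * lam r * \<kappa>"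
      by (simp add: b_def r_def s0m power_mult_distrib)
    also have "\<dots> = measure lborel (L (b * s0) ` cball 0 1)" by (rule vol[symmetric]) (simp add: bp s0)
    also have "\<dots> \<le> measure lborel (G_zonoid c)"
      by (rule measure_mono_fmeasurable[OF lower_sub])
         (auto intro: fmeasurable_compact[OF Gcompact] borel_closed compact_imp_closed[OF compE])
    finally show ?thesis .
  qed
  show ?thesis using low up by simp
qed


end
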